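(* Let $\rho$ be an $N$-qubit density matrix and let $\hat\rho,\hat\rho'$ be two independent Pauli shadows of $\rho$. Then $$\mathrm{Var}\big[\mathrm{Tr}(\hat\rho\hat\rho')\big]\le\mathbb{E}\big[\mathrm{Tr}(\hat\rho\hat\rho')^2\big]\le 8.5^N.$$
   Context: A Pauli shadow of an $N$-qubit state $\rho$ is obtained as follows: for each qubit $i$ choose a basis $\mathcal{B}_i\in\{\mathcal{X},\mathcal{Y},\mathcal{Z}\}$ independently and uniformly at random, measure a fresh copy of $\rho$ with each qubit $i$ in the eigenbasis of the Pauli operator $\mathcal{B}_i$, obtaining outcomes $s_i\in\{\pm\}$ (the post-measurement eigenstate being $|\mathcal{B}_i,s_i\rangle$), and set $\hat\rho=\bigotimes_{i=1}^N\big(3|\mathcal{B}_i,s_i\rangle\langle\mathcal{B}_i,s_i|-\mathbb{I}_2\big)$. Independent shadows use independent bases and independent copies of $\rho$. *)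

theory Defs
  imports "HOL-Probability.Probability"
begin

text \<open>An N-qubit operator is represented by its matrix entries in the computational
  basis, indexed by bit strings of length N (bool lists; bit i of the list is qubit i,
  False = |0>, True = |1>).  Only entries with both indices in qbits N are relevant.\<close>

type_synonym op = "bool list \<Rightarrow> bool list \<Rightarrow> complex"

definition qbits :: "nat \<Rightarrow> bool list set" where
  "qbits N = {xs. length xs = N}"

definition op_mult :: "nat \<Rightarrow> op \<Rightarrow> op \<Rightarrow> op" where
  "op_mult N A B = (\<lambda>x y. \<Sum>z\<in>qbits N. A x z * B z y)"

definition op_trace :: "nat \<Rightarrow> op \<Rightarrow> complex" where
  "op_trace N A = (\<Sum>x\<in>qbits N. A x x)"

definition hermitian_op :: "nat \<Rightarrow> op \<Rightarrow> bool" where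
  "hermitian_op N A \<longleftrightarrow> (\<forall>x\<in>qbits N. \<forall>y\<in>qbits N. A y x = cnj (A x y))"

definition psd_op :: "nat \<Rightarrow> op \<Rightarrow> bool" where
  "psd_op N A \<longleftrightarrow> hermitian_op N A \<and>
     (\<forall>v :: bool list \<Rightarrow> complex.
        0 \<le> Re (\<Sum>x\<in>qbits N. \<Sum>y\<in>qbits N. cnj (v x) * A x y * v y))"

definition density_matrix :: "nat \<Rightarrow> op \<Rightarrow> bool" where
  "density_matrix N \<rho> \<longleftrightarrow> psd_op N \<rho> \<and> op_trace N \<rho> = 1"

datatype pauli = PX | PY | PZ

lemma UNIV_pauli: "(UNIV :: pauli set) = {PX, PY, PZ}"
  using pauli.exhaust by blast

instance pauli :: finite
  by standard (simp add: UNIV_pauli)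

text \<open>ket b s j: the j-th computational-basis component (j = False ~ |0>, True ~ |1>)
  of the eigenvector |b,s> of the Pauli operator b with eigenvalue s
  (s = True means +1, s = False means -1).\<close>

fun ket :: "pauli \<Rightarrow> bool \<Rightarrow> bool \<Rightarrow> complex" where
  "ket PZ s j = (if j = (\<not> s) then 1 else 0)"
| "ket PX s j = (if j \<and> \<not> s then - 1 else 1) / complex_of_real (sqrt 2)"
| "ket PY s j = (if j then (if s then \<i> else - \<i>) else 1) / complex_of_real (sqrt 2)"

definition proj1 :: "pauli \<Rightarrow> bool \<Rightarrow> bool \<Rightarrow> bool \<Rightarrow> complex" where
  "proj1 b s j k = ket b s j * cnj (ket b s k)"

definition proj_prod :: "nat \<Rightarrow> pauli list \<Rightarrow> bool list \<Rightarrow> op" where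
  "proj_prod N B S = (\<lambda>x y. \<Prod>i<N. proj1 (B ! i) (S ! i) (x ! i) (y ! i))"

definition shadow :: "nat \<Rightarrow> pauli list \<Rightarrow> bool list \<Rightarrow> op" where
  "shadow N B S = (\<lambda>x y. \<Prod>i<N. 3 * proj1 (B ! i) (S ! i) (x ! i) (y ! i)
                                   - (if x ! i = y ! i then 1 else 0))"

text \<open>Joint probability of the bases B (uniform, independent) and the outcomes S
  (Born rule: Tr(rho |B,S><B,S|)).\<close>
definition shadow_weight :: "nat \<Rightarrow> op \<Rightarrow> pauli list \<times> bool list \<Rightarrow> real" where
  "shadow_weight N \<rho> = (\<lambda>(B, S).
     if length B = N \<and> length S = N
     then (1 / 3) ^ N * Re (op_trace N (op_mult N \<rho> (proj_prod N B S)))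
     else 0)"

definition shadow_pmf :: "nat \<Rightarrow> op \<Rightarrow> (pauli list \<times> bool list) pmf" where
  "shadow_pmf N \<rho> = embed_pmf (shadow_weight N \<rho>)"

definition shadow_overlap :: "nat \<Rightarrow> (pauli list \<times> bool list) \<times> (pauli list \<times> bool list) \<Rightarrow> real" where
  "shadow_overlap N = (\<lambda>((B, S), (B', S')).
     Re (op_trace N (op_mult N (shadow N B S) (shadow N B' S'))))"

end

theory Submission imports Defs begin

lemma lists_Suc: "{xs::'a list. length xs = Suc N} = (\<lambda>(a,xs). a # xs) ` (UNIV \<times> {xs. length xs = N})"
  by (auto simp: image_iff length_Suc_conv)

lemma finite_lists_N: "finite {xs::'a::finite list. length xs = N}"
  using finite_lists_length_eq[of "UNIV::'a set" N] by simp

lemma sum_lists_prod: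
  "(\<Sum>x\<in>{xs::'a::finite list. length xs = N}. \<Prod>i<N. h i (x!i)) = (\<Prod>i<N. \<Sum>a\<in>UNIV. (h i a :: 'b::comm_semiring_1))"
proof (induction N arbitrary: h)
  case 0
  then show ?case by simp
next
  case (Suc N)
  have inj: "inj_on (\<lambda>(a,xs). a # xs) (UNIV \<times> {xs::'a list. length xs = N})"
    by (auto simp: inj_on_def)
  have "(\<Sum>x\<in>{xs::'a list. length xs = Suc N}. \<Prod>i<Suc N. h i (x!i))
      = (\<Sum>(a,xs)\<in>UNIV \<times> {xs::'a list. length xs = N}. \<Prod>i<Suc N. h i ((a#xs)!i))"
    unfolding lists_Suc by (subst sum.reindex[OF inj]) (simp add: case_prod_unfold)
  also have "\<dots> = (\<Sum>a\<in>UNIV. \<Sum>xs\<in>{xs::'a list. length xs = N}. h 0 a * (\<Prod>i<N. h (Suc i) (xs!i)))"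
    by (subst sum.cartesian_product[symmetric]) (simp only: prod.lessThan_Suc_shift nth_Cons_0 nth_Cons_Suc)
  also have "\<dots> = (\<Sum>a\<in>UNIV. h 0 a * (\<Prod>i<N. \<Sum>b\<in>UNIV. h (Suc i) b))"
    by (simp add: sum_distrib_left[symmetric] Suc.IH[of "\<lambda>i. h (Suc i)"])
  also have "\<dots> = (\<Prod>i<Suc N. \<Sum>a\<in>UNIV. h i a)"
    by (simp only: prod.lessThan_Suc_shift sum_distrib_right)
  finally show ?case .
qed

lemma sum2_lists_prod:
  "(\<Sum>x\<in>{xs::'a::finite list. length xs = N}. \<Sum>z\<in>{xs::'c::finite list. length xs = N}. \<Prod>i<N. h i (x!i) (z!i))
    = (\<Prod>i<N. \<Sum>a\<in>UNIV. \<Sum>b\<in>UNIV. (h i a b :: 'b::comm_semiring_1))"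
proof -
  have *: "(\<Sum>z\<in>{xs::'c::finite list. length xs = N}. \<Prod>i<N. h i (x!i) (z!i)) = (\<Prod>i<N. \<Sum>b\<in>UNIV. h i (x!i) b)" for x
    by (rule sum_lists_prod[where h="\<lambda>i b. h i (x!i) b"])
  show ?thesis by (simp only: * sum_lists_prod[where h="\<lambda>i a. \<Sum>b\<in>UNIV. h i a b"])
qed

lemma sqrt2c: "complex_of_real (sqrt 2) * complex_of_real (sqrt 2) = 2"
  by (subst of_real_mult[symmetric]) simp

definition s1 :: "pauli \<Rightarrow> bool \<Rightarrow> bool \<Rightarrow> bool \<Rightarrow> complex" where
  "s1 b s j k = 3 * proj1 b s j k - (if j = k then 1 else 0)"

lemma proj1_sum: "(\<Sum>s\<in>UNIV. proj1 b s j k) = (if j = k then 1 else 0)"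
  by (cases b; cases j; cases k) (auto simp: proj1_def UNIV_bool sqrt2c field_simps)

lemma s1_tr: "(\<Sum>u\<in>UNIV. \<Sum>v\<in>UNIV. s1 b s u v * s1 b' s' v u) =
   (if b = b' then (if s = s' then 5 else -4) else 1/2)"
  by (cases b; cases b'; cases s; cases s') (auto simp: s1_def proj1_def UNIV_bool sqrt2c field_simps)

lemma qbits_eq: "qbits N = {xs::bool list. length xs = N}"
  by (simp add: qbits_def)

lemma finite_qbits: "finite (qbits N)"
  unfolding qbits_eq by (rule finite_lists_N)

lemma prod_delta:
  assumes "x \<in> qbits N" "z \<in> qbits N"
  shows "(\<Prod>i<N. (if z!i = x!i then 1 else 0 :: complex)) = (if z = x then 1 else 0)"
proof (cases "z = x")
  case True then show ?thesis by simp
next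
  case False
  then obtain i where "i < N" "z!i \<noteq> x!i"
    using assms nth_equalityI[of z x] by (auto simp: qbits_def)
  then show ?thesis using False by (auto intro!: bexI[of _ i])
qed

lemma trace_proj_eq:
  "op_trace N (op_mult N \<rho> (proj_prod N B S)) =
    (\<Sum>x\<in>qbits N. \<Sum>z\<in>qbits N. \<rho> x z * (\<Prod>i<N. proj1 (B!i) (S!i) (z!i) (x!i)))"
  by (simp add: op_trace_def op_mult_def proj_prod_def)

lemma swap3: "(\<Sum>a\<in>A. \<Sum>b\<in>B. \<Sum>c\<in>C. f a b c) = (\<Sum>b\<in>B. \<Sum>c\<in>C. \<Sum>a\<in>A. f a b c)"
proof -
  have "(\<Sum>a\<in>A. \<Sum>b\<in>B. \<Sum>c\<in>C. f a b c) = (\<Sum>b\<in>B. \<Sum>a\<in>A. \<Sum>c\<in>C. f a b c)"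
    by (rule sum.swap)
  also have "\<dots> = (\<Sum>b\<in>B. \<Sum>c\<in>C. \<Sum>a\<in>A. f a b c)"
    by (rule sum.cong[OF refl], rule sum.swap)
  finally show ?thesis .
qed

lemma sum_S_trace:
  "(\<Sum>S\<in>qbits N. op_trace N (op_mult N \<rho> (proj_prod N B S))) = op_trace N \<rho>"
proof -
  have "(\<Sum>S\<in>qbits N. op_trace N (op_mult N \<rho> (proj_prod N B S)))
     = (\<Sum>x\<in>qbits N. \<Sum>z\<in>qbits N. \<rho> x z * (\<Sum>S\<in>qbits N. \<Prod>i<N. proj1 (B!i) (S!i) (z!i) (x!i)))"
    unfolding trace_proj_eq sum_distrib_left by (rule swap3)
  also have "\<dots> = (\<Sum>x\<in>qbits N. \<Sum>z\<in>qbits N. \<rho> x z * (\<Prod>i<N. (if z!i = x!i then 1 else 0)))"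
    unfolding qbits_eq sum_lists_prod[where h="\<lambda>i s. proj1 (B!i) s (z!i) (x!i)" for x z] proj1_sum by simp
  also have "\<dots> = (\<Sum>x\<in>qbits N. \<Sum>z\<in>qbits N. \<rho> x z * (if z = x then 1 else 0))"
    by (intro sum.cong refl) (simp add: prod_delta)
  also have "\<dots> = op_trace N \<rho>"
    by (simp add: op_trace_def finite_qbits if_distrib cong: if_cong)
  finally show ?thesis .
qed

lemma trace_proj_nonneg:
  assumes "psd_op N \<rho>"
  shows "0 \<le> Re (op_trace N (op_mult N \<rho> (proj_prod N B S)))"
proof -
  define v where "v y = (\<Prod>i<N. ket (B!i) (S!i) (y!i))" for y
  have "op_trace N (op_mult N \<rho> (proj_prod N B S)) =
     (\<Sum>x\<in>qbits N. \<Sum>z\<in>qbits N. cnj (v x) * \<rho> x z * v z)"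
    unfolding trace_proj_eq v_def proj1_def
    by (intro sum.cong refl) (simp add: prod.distrib mult_ac)
  then show ?thesis using assms unfolding psd_op_def by simp
qed

definition tr1 :: "pauli \<Rightarrow> bool \<Rightarrow> pauli \<Rightarrow> bool \<Rightarrow> real" where
  "tr1 b s b' s' = (if b = b' then (if s = s' then 5 else -4) else 1/2)"

lemma overlap_eq:
  "shadow_overlap N ((B,S),(B',S')) = (\<Prod>i<N. tr1 (B!i) (S!i) (B'!i) (S'!i))"
proof -
  have "op_trace N (op_mult N (shadow N B S) (shadow N B' S')) =
     (\<Sum>x\<in>qbits N. \<Sum>z\<in>qbits N. \<Prod>i<N. s1 (B!i) (S!i) (x!i) (z!i) * s1 (B'!i) (S'!i) (z!i) (x!i))"
    unfolding op_trace_def op_mult_def shadow_def s1_def prod.distrib by (rule refl)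
  also have "\<dots> = (\<Prod>i<N. complex_of_real (tr1 (B!i) (S!i) (B'!i) (S'!i)))"
    unfolding qbits_eq sum2_lists_prod[where h="\<lambda>i a b. s1 (B!i) (S!i) a b * s1 (B'!i) (S'!i) b a"] s1_tr tr1_def by (intro prod.cong refl) simp
  also have "\<dots> = complex_of_real (\<Prod>i<N. tr1 (B!i) (S!i) (B'!i) (S'!i))"
    by (rule of_real_prod[symmetric])
  finally show ?thesis unfolding shadow_overlap_def by (simp del: of_real_prod)
qed

abbreviation LB :: "nat \<Rightarrow> pauli list set" where
  "LB N \<equiv> {B::pauli list. length B = N}"

lemma weight_nonneg: "density_matrix N \<rho> \<Longrightarrow> 0 \<le> shadow_weight N \<rho> x"
  by (cases x) (auto simp: shadow_weight_def density_matrix_def intro!: mult_nonneg_nonneg trace_proj_nonneg)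

lemma weight_zero: "x \<notin> LB N \<times> qbits N \<Longrightarrow> shadow_weight N \<rho> x = 0"
  by (cases x) (auto simp: shadow_weight_def qbits_def)

lemma weight_sum_S:
  assumes "density_matrix N \<rho>" "length B = N"
  shows "(\<Sum>S\<in>qbits N. shadow_weight N \<rho> (B,S)) = (1/3)^N"
proof -
  have "(\<Sum>S\<in>qbits N. shadow_weight N \<rho> (B,S)) =
      (\<Sum>S\<in>qbits N. (1/3)^N * Re (op_trace N (op_mult N \<rho> (proj_prod N B S))))"
    by (intro sum.cong refl) (simp add: shadow_weight_def qbits_def assms)
  also have "\<dots> = (1/3)^N * Re (\<Sum>S\<in>qbits N. op_trace N (op_mult N \<rho> (proj_prod N B S)))"
    by (simp add: sum_distrib_left)
  also have "\<dots> = (1/3)^N"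
    using assms by (simp add: sum_S_trace density_matrix_def)
  finally show ?thesis .
qed

lemma weight_sum_fst:
  assumes "density_matrix N \<rho>"
  shows "(\<Sum>b\<in>LB N \<times> qbits N. shadow_weight N \<rho> b * F (fst b)) = (1/3)^N * (\<Sum>B\<in>LB N. F B)"
proof -
  have "(\<Sum>b\<in>LB N \<times> qbits N. shadow_weight N \<rho> b * F (fst b))
      = (\<Sum>B\<in>LB N. \<Sum>S\<in>qbits N. shadow_weight N \<rho> (B,S) * F B)"
    by (subst sum.cartesian_product) (simp add: case_prod_unfold)
  also have "\<dots> = (\<Sum>B\<in>LB N. F B * (\<Sum>S\<in>qbits N. shadow_weight N \<rho> (B,S)))"
    by (simp add: sum_distrib_left mult_ac)
  also have "\<dots> = (\<Sum>B\<in>LB N. F B * (1/3)^N)"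
    by (intro sum.cong refl) (simp add: weight_sum_S[OF assms])
  also have "\<dots> = (1/3)^N * (\<Sum>B\<in>LB N. F B)"
    by (simp add: sum_distrib_left mult.commute)
  finally show ?thesis .
qed

lemma card_pauli: "card (UNIV :: pauli set) = 3"
  by (simp add: UNIV_pauli)

lemma weight_total:
  assumes "density_matrix N \<rho>"
  shows "(\<Sum>b\<in>LB N \<times> qbits N. shadow_weight N \<rho> b) = 1"
proof -
  have "(\<Sum>b\<in>LB N \<times> qbits N. shadow_weight N \<rho> b) = (1/3)^N * (\<Sum>B\<in>LB N. 1)"
    using weight_sum_fst[OF assms, of "\<lambda>_. 1"] by simp
  also have "(1/3::real)^N * (\<Sum>B\<in>LB N. 1) = (\<Sum>B\<in>LB N. \<Prod>i<N. (\<lambda>i a. 1/3::real) i (B!i))"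
    by (simp add: sum_distrib_left)
  also have "\<dots> = (\<Prod>i<N. \<Sum>a\<in>(UNIV::pauli set). 1/3::real)"
    by (rule sum_lists_prod)
  also have "\<dots> = 1" by (simp add: card_pauli)
  finally show ?thesis .
qed

lemma pmf_shadow:
  assumes "density_matrix N \<rho>"
  shows "pmf (shadow_pmf N \<rho>) x = shadow_weight N \<rho> x"
  unfolding shadow_pmf_def
proof (rule pmf_embed_pmf)
  show "0 \<le> shadow_weight N \<rho> x" for x by (rule weight_nonneg[OF assms])
  have fin: "finite (LB N \<times> qbits N)" by (simp add: finite_lists_N finite_qbits)
  have "(\<integral>\<^sup>+x. ennreal (shadow_weight N \<rho> x) \<partial>count_space UNIV)
     = (\<Sum>x\<in>LB N \<times> qbits N. ennreal (shadow_weight N \<rho> x))"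
    by (rule nn_integral_count_space'[OF fin]) (auto simp: weight_zero)
  also have "\<dots> = ennreal (\<Sum>x\<in>LB N \<times> qbits N. shadow_weight N \<rho> x)"
    by (rule sum_ennreal) (rule weight_nonneg[OF assms])
  also have "\<dots> = 1" by (simp add: weight_total[OF assms])
  finally show "(\<integral>\<^sup>+x. ennreal (shadow_weight N \<rho> x) \<partial>count_space UNIV) = 1" .
qed

definition gg :: "pauli \<Rightarrow> pauli \<Rightarrow> real" where
  "gg b b' = (if b = b' then 25 else 1/4)"

lemma overlap_sq_le:
  "(shadow_overlap N ((B,S),(B',S')))\<^sup>2 \<le> (\<Prod>i<N. gg (B!i) (B'!i))"
  unfolding overlap_eq prod_power_distrib
  by (rule prod_mono) (auto simp: tr1_def gg_def power2_eq_square)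

lemma gg_sum: "(\<Sum>a\<in>UNIV. \<Sum>b\<in>UNIV. gg a b / 9) = 8.5"
  by (simp add: UNIV_pauli gg_def)

lemma E2_bound:
  assumes dm: "density_matrix N \<rho>"
  shows "measure_pmf.expectation (pair_pmf (shadow_pmf N \<rho>) (shadow_pmf N \<rho>))
               (\<lambda>\<omega>. (shadow_overlap N \<omega>)\<^sup>2) \<le> 8.5 ^ N"
proof -
  define p where "p = shadow_pmf N \<rho>"
  define A where "A = LB N \<times> qbits N"
  define w where "w = shadow_weight N \<rho>"
  define G where "G B B' = (\<Prod>i<N. gg (B!i) (B'!i))" for B B'
  have finA: "finite A" by (simp add: A_def finite_lists_N finite_qbits)
  have pmf_p: "pmf p x = w x" for x unfolding p_def w_def by (rule pmf_shadow[OF dm])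
  have w0: "0 \<le> w x" for x unfolding w_def by (rule weight_nonneg[OF dm])
  have setp: "set_pmf p \<subseteq> A"
  proof
    fix x assume "x \<in> set_pmf p"
    then have "w x \<noteq> 0" by (simp add: set_pmf_iff pmf_p)
    then show "x \<in> A" using weight_zero[of x N \<rho>] unfolding w_def A_def by blast
  qed
  have pp: "pmf (pair_pmf p p) \<omega> = w (fst \<omega>) * w (snd \<omega>)" for \<omega>
    by (cases \<omega>) (simp add: pmf_pair pmf_p)
  have "measure_pmf.expectation (pair_pmf p p) (\<lambda>\<omega>. (shadow_overlap N \<omega>)\<^sup>2)
      = (\<Sum>\<omega>\<in>A \<times> A. pmf (pair_pmf p p) \<omega> *\<^sub>R (shadow_overlap N \<omega>)\<^sup>2)"
    by (rule integral_measure_pmf) (use finA setp in fastforce)+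
  also have "\<dots> = (\<Sum>\<omega>\<in>A \<times> A. w (fst \<omega>) * w (snd \<omega>) * (shadow_overlap N \<omega>)\<^sup>2)"
    by (intro sum.cong refl) (simp only: pp real_scaleR_def)
  also have "\<dots> \<le> (\<Sum>\<omega>\<in>A \<times> A. w (fst \<omega>) * w (snd \<omega>) * G (fst (fst \<omega>)) (fst (snd \<omega>)))"
  proof (rule sum_mono)
    fix \<omega> :: "(pauli list \<times> bool list) \<times> (pauli list \<times> bool list)"
    obtain B S B' S' where om: "\<omega> = ((B,S),(B',S'))" by (metis prod.collapse)
    show "w (fst \<omega>) * w (snd \<omega>) * (shadow_overlap N \<omega>)\<^sup>2
        \<le> w (fst \<omega>) * w (snd \<omega>) * G (fst (fst \<omega>)) (fst (snd \<omega>))"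
      unfolding om G_def using overlap_sq_le[of N B S B' S'] w0
      by (intro mult_left_mono) (auto intro: mult_nonneg_nonneg)
  qed
  also have "\<dots> = (\<Sum>a\<in>A. w a * (\<Sum>b\<in>A. w b * G (fst a) (fst b)))"
    by (simp only: sum.cartesian_product' fst_conv snd_conv sum_distrib_left mult.assoc mult.left_commute)
  also have "\<dots> = (\<Sum>a\<in>A. w a * ((1/3)^N * (\<Sum>B'\<in>LB N. G (fst a) B')))"
    unfolding A_def w_def by (simp only: weight_sum_fst[OF dm])
  also have "\<dots> = (1/3)^N * (\<Sum>B\<in>LB N. (1/3)^N * (\<Sum>B'\<in>LB N. G B B'))"
    unfolding A_def w_def by (rule weight_sum_fst[OF dm])
  also have "\<dots> = (\<Sum>B\<in>LB N. \<Sum>B'\<in>LB N. \<Prod>i<N. gg (B!i) (B'!i) / 9)"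
  proof -
    have "(\<Prod>i<N. gg (B!i) (B'!i) / 9) = (1/3)^N * ((1/3)^N * G B B')" for B B'
    proof -
      have "(\<Prod>i<N. gg (B!i) (B'!i) / 9) = (\<Prod>i<N. gg (B!i) (B'!i) * (1/9))" by simp
      also have "\<dots> = G B B' * (1/9)^N" by (simp add: G_def prod_dividef power_one_over)
      also have "\<dots> = (1/3)^N * ((1/3)^N * G B B')"
        by (simp add: power_mult_distrib[symmetric] mult_ac)
      finally show ?thesis .
    qed
    then show ?thesis by (simp add: sum_distrib_left)
  qed
  also have "\<dots> = (\<Prod>i<N. \<Sum>a\<in>UNIV. \<Sum>b\<in>UNIV. gg a b / 9)"
    by (rule sum2_lists_prod)
  also have "\<dots> = 8.5 ^ N" by (simp add: gg_sum)
  finally show ?thesis unfolding p_def .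
qed

theorem lemma3:
  fixes N :: nat and \<rho> :: op
  assumes "density_matrix N \<rho>"
  shows "measure_pmf.variance (pair_pmf (shadow_pmf N \<rho>) (shadow_pmf N \<rho>)) (shadow_overlap N)
           \<le> measure_pmf.expectation (pair_pmf (shadow_pmf N \<rho>) (shadow_pmf N \<rho>))
               (\<lambda>\<omega>. (shadow_overlap N \<omega>)\<^sup>2)
         \<and> measure_pmf.expectation (pair_pmf (shadow_pmf N \<rho>) (shadow_pmf N \<rho>))
               (\<lambda>\<omega>. (shadow_overlap N \<omega>)\<^sup>2) \<le> 8.5 ^ N"
proof
  define p where "p = shadow_pmf N \<rho>"
  have setp: "set_pmf p \<subseteq> LB N \<times> qbits N"
  proof
    fix x assume "x \<in> set_pmf p"
    then have "shadow_weight N \<rho> x \<noteq> 0"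
      by (simp add: set_pmf_iff p_def pmf_shadow[OF assms])
    then show "x \<in> LB N \<times> qbits N" using weight_zero[of x N \<rho>] by blast
  qed
  have fin: "finite (set_pmf (pair_pmf p p))"
  proof -
    have "finite (set_pmf p)"
      by (rule finite_subset[OF setp]) (simp add: finite_lists_N finite_qbits)
    then show ?thesis by simp
  qed
  have "measure_pmf.variance (pair_pmf p p) (shadow_overlap N)
      = measure_pmf.expectation (pair_pmf p p) (\<lambda>\<omega>. (shadow_overlap N \<omega>)\<^sup>2)
        - (measure_pmf.expectation (pair_pmf p p) (shadow_overlap N))\<^sup>2"
    by (rule measure_pmf.variance_eq) (rule integrable_measure_pmf_finite[OF fin])+
  also have "\<dots> \<le> measure_pmf.expectation (pair_pmf p p) (\<lambda>\<omega>. (shadow_overlap N \<omega>)\<^sup>2)"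
    by simp
  finally show "measure_pmf.variance (pair_pmf (shadow_pmf N \<rho>) (shadow_pmf N \<rho>)) (shadow_overlap N)
           \<le> measure_pmf.expectation (pair_pmf (shadow_pmf N \<rho>) (shadow_pmf N \<rho>))
               (\<lambda>\<omega>. (shadow_overlap N \<omega>)\<^sup>2)" unfolding p_def .
  show "measure_pmf.expectation (pair_pmf (shadow_pmf N \<rho>) (shadow_pmf N \<rho>))
               (\<lambda>\<omega>. (shadow_overlap N \<omega>)\<^sup>2) \<le> 8.5 ^ N"
    by (rule E2_bound[OF assms])
qed

end
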